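(* There exist continuous increasing convex functions $\Phi:[1,\infty)\to[1,\infty)$ such that $$\int_1^\infty\log\Phi(t)\,\frac{dt}{t^2}=\infty,\qquad \liminf_{t\to\infty}\frac{\log\Phi(t)}{\log t}=1,$$ and $\Phi(t)\ge t$ for all $t\in[1,\infty)$. *)

theory Defs
  imports "HOL-Analysis.Analysis"
begin

end

theory Submission imports Defs begin
fun sq :: "nat \<Rightarrow> real" where
  "sq 0 = 2" | "sq (Suc k) = exp (sq k ^ 2)"

definition cc :: "nat \<Rightarrow> real" where "cc k = exp (sq k)"

definition PhiN :: "nat \<Rightarrow> real \<Rightarrow> real" where
  "PhiN N t = t + (\<Sum>j<N. cc j * max 0 (t - sq j))"

definition Phi :: "real \<Rightarrow> real" where
  "Phi t = PhiN (nat \<lceil>t\<rceil>) t"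

lemma sq_ge: "sq k \<ge> real k + 2"
proof (induction k)
  case 0 then show ?case by simp
next
  case (Suc k)
  have h: "sq k * sq k \<ge> 2 * sq k" using Suc by (intro mult_right_mono) auto
  have "sq k ^ 2 \<ge> sq k + 1" using Suc h unfolding power2_eq_square by linarith
  moreover have "exp (sq k ^ 2) \<ge> 1 + sq k ^ 2" using exp_ge_add_one_self by simp
  moreover have "sq (Suc k) = exp (sq k ^ 2)" by simp
  ultimately show ?case using Suc by (simp only: of_nat_Suc)
qed

lemma sq_double: "sq (Suc k) > 2 * sq k"
proof -
  have a: "sq k \<ge> 2" using sq_ge[of k] by simp
  have h: "sq k * sq k \<ge> 2 * sq k" using a by (intro mult_right_mono) auto
  have "exp (sq k ^ 2) \<ge> exp (2 * sq k)" using h unfolding power2_eq_square by (simp only: exp_le_cancel_iff)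
  also have "exp (2 * sq k) = exp (sq k) * exp (sq k)" using exp_add[of "sq k" "sq k"] by (simp only: mult_2)
  also have "\<dots> \<ge> (1 + sq k) * (1 + sq k)"
    using exp_ge_add_one_self[of "sq k"] a by (intro mult_mono) auto
  finally have "(1 + sq k) * (1 + sq k) \<le> sq (Suc k)" by simp
  moreover have "(1 + sq k) * (1 + sq k) = 1 + 2 * sq k + sq k * sq k" by algebra
  moreover have "sq k * sq k \<ge> 0" using a by simp
  ultimately show ?thesis by linarith
qed

lemma sq_mono: "strict_mono sq"
  unfolding strict_mono_Suc_iff using sq_double sq_ge 
  proof (intro allI)
  fix n have "sq n \<ge> 2" using sq_ge[of n] by simp
  then show "sq n < sq (Suc n)" using sq_double[of n] by linarith
qed

lemma sq_le_iff: "sq i \<le> sq j \<longleftrightarrow> i \<le> j"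
  using sq_mono by (simp add: strict_mono_less_eq)

lemma PhiN_eq_aux: "t \<le> sq M \<Longrightarrow> M \<le> N \<Longrightarrow> PhiN N t = PhiN M t"
proof -
  assume t: "t \<le> sq M" and MN: "M \<le> N"
  have "{..<N} = {..<M} \<union> {M..<N}" using MN by auto
  have "(\<Sum>j<N. cc j * max 0 (t - sq j)) = (\<Sum>j<M. cc j * max 0 (t - sq j)) + (\<Sum>j\<in>{M..<N}. cc j * max 0 (t - sq j))"
    unfolding \<open>{..<N} = {..<M} \<union> {M..<N}\<close> by (subst sum.union_disjoint) auto
  moreover have "(\<Sum>j\<in>{M..<N}. cc j * max 0 (t - sq j)) = 0"
  proof (rule sum.neutral, intro ballI)
    fix j assume "j \<in> {M..<N}"
    then have "sq M \<le> sq j" using sq_le_iff by auto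
    then show "cc j * max 0 (t - sq j) = 0" using t by simp
  qed
  ultimately show ?thesis unfolding PhiN_def by simp
qed

lemma PhiN_eq: "t \<le> sq M \<Longrightarrow> t \<le> sq N \<Longrightarrow> PhiN N t = PhiN M t"
proof (cases "M \<le> N")
  case True
  assume "t \<le> sq M" then show ?thesis using PhiN_eq_aux True by blast
next
  case False
  assume "t \<le> sq N" then show ?thesis using PhiN_eq_aux[of t N M] False by simp
qed

lemma ceil_le_sq: "t \<le> sq (nat \<lceil>t\<rceil>)"
  using sq_ge[of "nat \<lceil>t\<rceil>"] by linarith

lemma Phi_eq: "t \<le> sq N \<Longrightarrow> Phi t = PhiN N t"
proof -
  assume a: "t \<le> sq N"
  have "PhiN N t = PhiN (nat \<lceil>t\<rceil>) t" by (rule PhiN_eq[OF ceil_le_sq a])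
  then show ?thesis by (simp add: Phi_def)
qed

lemma PhiN_cont: "continuous_on UNIV (PhiN N)"
  unfolding PhiN_def by (intro continuous_intros)

lemma Phi_isCont: "isCont Phi t"
proof -
  define N where "N = Suc (nat \<lceil>t\<rceil>)"
  have "sq N \<ge> t + 1" using sq_ge[of N] unfolding N_def by linarith
  then have "eventually (\<lambda>x. x \<in> ball t 1) (nhds t)" by (intro eventually_nhds_in_open) auto
  then have ev: "eventually (\<lambda>x. Phi x = PhiN N x) (nhds t)"
  proof eventually_elim
    case (elim x)
    then have "x \<le> sq N" using \<open>sq N \<ge> t + 1\<close> by (simp add: dist_real_def)
    then show ?case by (rule Phi_eq)
  qed
  have "isCont (PhiN N) t" using PhiN_cont[of N]
    by (simp add: continuous_on_eq_continuous_at)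
  moreover have "isCont Phi t \<longleftrightarrow> isCont (PhiN N) t" by (rule isCont_cong[OF ev])
  ultimately show ?thesis by simp
qed

lemma ramp_convex: "convex_on UNIV (\<lambda>t::real. cc j * max 0 (t - a))"
proof -
  have c: "cc j \<ge> 0" unfolding cc_def by simp
  have "convex_on UNIV (\<lambda>t::real. max 0 (t - a))"
    unfolding convex_on_def
  proof (intro conjI ballI allI impI convex_UNIV)
    fix x y u v :: real assume uv: "0 \<le> u" "0 \<le> v" "u + v = 1"
    have h1: "u * max 0 (x - a) \<ge> u * (x - a)" "v * max 0 (y - a) \<ge> v * (y - a)"
      using uv by (auto intro: mult_left_mono)
    have h2: "u * max 0 (x - a) \<ge> 0" "v * max 0 (y - a) \<ge> 0" using uv by auto
    have h3: "u * x + v * y - a = u * (x - a) + v * (y - a)" using uv by algebra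
    have "max 0 (u * x + v * y - a) \<le> u * max 0 (x - a) + v * max 0 (y - a)"
      unfolding h3 using h1 h2 by (intro max.boundedI) linarith+
    then show "max 0 (u *\<^sub>R x + v *\<^sub>R y - a) \<le> u * max 0 (x - a) + v * max 0 (y - a)"
      by simp
  qed
  then show ?thesis using c by (simp add: convex_on_cmul)
qed

lemma PhiN_convex: "convex_on UNIV (PhiN N)"
proof -
  have "convex_on UNIV (\<lambda>t. \<Sum>j<N. cc j * max 0 (t - sq j))"
  proof (induction N)
    case 0 then show ?case by (simp add: convex_on_const)
  next
    case (Suc N) then show ?case by (simp add: convex_on_add ramp_convex)
  qed
  then show ?thesis unfolding PhiN_def by (intro convex_on_add) (auto simp: convex_on_ident)
qed


lemma cc_pos: "cc k > 0" unfolding cc_def by simp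

lemma PhiN_ge: "PhiN N t \<ge> t"
proof -
  have "(\<Sum>j<N. cc j * max 0 (t - sq j)) \<ge> 0"
    by (intro sum_nonneg) (simp add: less_imp_le[OF cc_pos])
  then show ?thesis unfolding PhiN_def by simp
qed

lemma Phi_ge: "Phi t \<ge> t"
  unfolding Phi_def by (rule PhiN_ge)

lemma PhiN_strict: "x < y \<Longrightarrow> PhiN N x < PhiN N y"
proof -
  assume xy: "x < y"
  have "(\<Sum>j<N. cc j * max 0 (x - sq j)) \<le> (\<Sum>j<N. cc j * max 0 (y - sq j))"
  proof (intro sum_mono mult_left_mono)
    fix j show "max 0 (x - sq j) \<le> max 0 (y - sq j)" using xy by simp
    show "0 \<le> cc j" using cc_pos[of j] by simp
  qed
  then show ?thesis using xy unfolding PhiN_def by simp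
qed

lemma Phi_strict: "x < y \<Longrightarrow> Phi x < Phi y"
proof -
  assume xy: "x < y"
  define N where "N = nat \<lceil>y\<rceil>"
  have y: "y \<le> sq N" unfolding N_def by (rule ceil_le_sq)
  then have x: "x \<le> sq N" using xy by simp
  show ?thesis using Phi_eq[OF x] Phi_eq[OF y] PhiN_strict[OF xy] by simp
qed

lemma Phi_convex: "convex_on {1..} Phi"
  unfolding convex_on_def
proof (intro conjI ballI allI impI)
  show "convex {1::real..}" by (rule convex_real_interval)
next
  fix x y u v :: real assume xy: "x \<in> {1..}" "y \<in> {1..}" and uv: "0 \<le> u" "0 \<le> v" "u + v = 1"
  define N where "N = nat \<lceil>max x y\<rceil>"
  have m: "max x y \<le> sq N" unfolding N_def by (rule ceil_le_sq)
  have "u * x + v * y \<le> u * max x y + v * max x y" using uv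
    by (intro add_mono mult_left_mono) auto
  also have "\<dots> = max x y" using uv by algebra
  finally have z: "u * x + v * y \<le> sq N" using m by linarith
  have "PhiN N (u *\<^sub>R x + v *\<^sub>R y) \<le> u * PhiN N x + v * PhiN N y"
    using PhiN_convex[of N] uv unfolding convex_on_def by blast
  moreover have "Phi (u *\<^sub>R x + v *\<^sub>R y) = PhiN N (u *\<^sub>R x + v *\<^sub>R y)"
    using z by (simp add: Phi_eq)
  moreover have "Phi x = PhiN N x" "Phi y = PhiN N y" using m by (simp_all add: Phi_eq)
  ultimately show "Phi (u *\<^sub>R x + v *\<^sub>R y) \<le> u * Phi x + v * Phi y" by simp
qed

lemma Phi_ge_ramp: "sq k < t \<Longrightarrow> Phi t \<ge> cc k * (t - sq k)"
proof -
  assume kt: "sq k < t"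
  define N where "N = nat \<lceil>t\<rceil>"
  have tN: "t \<le> sq N" unfolding N_def by (rule ceil_le_sq)
  have "k < N"
  proof (rule ccontr)
    assume "\<not> k < N" then have "sq N \<le> sq k" using sq_le_iff by simp
    then show False using kt tN by simp
  qed
  have "cc k * max 0 (t - sq k) \<le> (\<Sum>j<N. cc j * max 0 (t - sq j))"
    using \<open>k < N\<close> by (intro member_le_sum) (auto intro: mult_nonneg_nonneg less_imp_le[OF cc_pos])
  moreover have "t \<ge> 0" using kt sq_ge[of k] by simp
  ultimately have "cc k * (t - sq k) \<le> PhiN N t" using kt unfolding PhiN_def by simp
  then show ?thesis using Phi_eq[OF tN] by simp
qed

lemma block_lower:
  assumes t: "t \<in> {2 * sq k .. 4 * sq k}"
  shows "ln (Phi t) / t\<^sup>2 \<ge> 1 / (16 * sq k)"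
proof -
  have s2: "sq k \<ge> 2" using sq_ge[of k] by simp
  have "Phi t \<ge> cc k * (t - sq k)" using t s2 by (intro Phi_ge_ramp) auto
  moreover have "cc k * (t - sq k) \<ge> cc k * 1" using t s2 cc_pos[of k]
    by (intro mult_left_mono) auto
  ultimately have P: "Phi t \<ge> cc k" by simp
  have "ln (Phi t) \<ge> ln (cc k)" using P cc_pos[of k] by simp
  then have L: "ln (Phi t) \<ge> sq k" unfolding cc_def by simp
  have tpos: "t > 0" using t s2 by simp
  have "t\<^sup>2 \<le> (4 * sq k)\<^sup>2" using t tpos by (intro power_mono) auto
  then have T: "t\<^sup>2 \<le> 16 * (sq k * sq k)" by (simp add: power2_eq_square)
  have "sq k / (16 * (sq k * sq k)) \<le> ln (Phi t) / t\<^sup>2"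
    using L T tpos s2 by (intro frac_le) auto
  moreover have "sq k / (16 * (sq k * sq k)) = 1 / (16 * sq k)" using s2 by (simp add: field_simps)
  ultimately show ?thesis by simp
qed

lemma blocks_disj: "j < k \<Longrightarrow> 4 * sq j < 2 * sq k"
proof -
  assume "j < k" then have "Suc j \<le> k" by simp
  then have "sq (Suc j) \<le> sq k" using sq_le_iff by blast
  then show ?thesis using sq_double[of j] by simp
qed


lemma pointwise:
  "(\<Sum>k<n. ennreal (1 / (16 * sq k)) * indicator {2 * sq k .. 4 * sq k} t)
     \<le> ennreal (ln (Phi t) / t\<^sup>2) * indicator {1..} t"
proof (cases "\<exists>k<n. t \<in> {2 * sq k .. 4 * sq k}")
  case True
  then obtain k where k: "k < n" "t \<in> {2 * sq k .. 4 * sq k}" by blast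
  have s2: "sq k \<ge> 2" using sq_ge[of k] by simp
  have zero: "(\<Sum>j\<in>{..<n} - {k}. ennreal (1 / (16 * sq j)) * indicator {2 * sq j .. 4 * sq j} t) = 0"
  proof (rule sum.neutral, intro ballI)
    fix j assume j: "j \<in> {..<n} - {k}"
    have "t \<notin> {2 * sq j .. 4 * sq j}"
    proof
      assume tj: "t \<in> {2 * sq j .. 4 * sq j}"
      have "j < k \<or> k < j" using j by auto
      then show False
      proof
        assume "j < k" then show False using blocks_disj[of j k] tj k(2) by simp
      next
        assume "k < j" then show False using blocks_disj[of k j] tj k(2) by simp
      qed
    qed
    then show "ennreal (1 / (16 * sq j)) * indicator {2 * sq j .. 4 * sq j} t = 0" by simp
  qed
  have "(\<Sum>k<n. ennreal (1 / (16 * sq k)) * indicator {2 * sq k .. 4 * sq k} t)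
     = ennreal (1 / (16 * sq k)) * indicator {2 * sq k .. 4 * sq k} t
       + (\<Sum>j\<in>{..<n} - {k}. ennreal (1 / (16 * sq j)) * indicator {2 * sq j .. 4 * sq j} t)"
    using k(1) by (subst sum.remove[of _ k]) auto
  also have "\<dots> = ennreal (1 / (16 * sq k))" using zero k(2) by simp
  also have "\<dots> \<le> ennreal (ln (Phi t) / t\<^sup>2)" using block_lower[OF k(2)] by (rule ennreal_leI)
  also have "\<dots> = ennreal (ln (Phi t) / t\<^sup>2) * indicator {1..} t" using k(2) s2 by simp
  finally show ?thesis .
next
  case False
  have z: "(\<Sum>k<n. ennreal (1 / (16 * sq k)) * indicator {2 * sq k .. 4 * sq k} t) = 0"
    using False by (intro sum.neutral) (auto simp: indicator_def)
  show ?thesis unfolding z by (rule zero_le)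
qed

lemma integral_lower:
  "ennreal (real n / 8) \<le> (\<integral>\<^sup>+ t\<in>{1..}. ennreal (ln (Phi t) / t\<^sup>2) \<partial>lborel)"
proof -
  have "(\<integral>\<^sup>+ t. (\<Sum>k<n. ennreal (1 / (16 * sq k)) * indicator {2 * sq k .. 4 * sq k} t) \<partial>lborel)
      = (\<Sum>k<n. \<integral>\<^sup>+ t. ennreal (1 / (16 * sq k)) * indicator {2 * sq k .. 4 * sq k} t \<partial>lborel)"
    by (intro nn_integral_sum) simp
  also have "\<dots> = (\<Sum>k<n. ennreal (1 / (16 * sq k)) * emeasure lborel {2 * sq k .. 4 * sq k})"
    by (intro sum.cong refl nn_integral_cmult_indicator) simp
  also have "\<dots> = (\<Sum>k<n. ennreal (1 / 8))"
  proof (intro sum.cong refl)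
    fix k
    have s2: "sq k \<ge> 2" using sq_ge[of k] by simp
    have m: "emeasure lborel {2 * sq k .. 4 * sq k} = ennreal (2 * sq k)" using s2 by simp
    have e: "ennreal (1 / (16 * sq k)) * ennreal (2 * sq k) = ennreal (1 / (16 * sq k) * (2 * sq k))"
      by (rule ennreal_mult[symmetric]) (use s2 in auto)
    have f: "1 / (16 * sq k) * (2 * sq k) = 1 / 8" using s2 by (simp add: field_simps)
    show "ennreal (1 / (16 * sq k)) * emeasure lborel {2 * sq k .. 4 * sq k} = ennreal (1 / 8)"
      unfolding m e f by (rule refl)
  qed
  also have "\<dots> = ennreal (\<Sum>k<n. 1 / 8)" by (rule sum_ennreal) simp
  also have "\<dots> = ennreal (real n / 8)" by simp
  finally have eq: "(\<integral>\<^sup>+ t. (\<Sum>k<n. ennreal (1 / (16 * sq k)) * indicator {2 * sq k .. 4 * sq k} t) \<partial>lborel) = ennreal (real n / 8)" .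
  have "(\<integral>\<^sup>+ t. (\<Sum>k<n. ennreal (1 / (16 * sq k)) * indicator {2 * sq k .. 4 * sq k} t) \<partial>lborel)
      \<le> (\<integral>\<^sup>+ t. ennreal (ln (Phi t) / t\<^sup>2) * indicator {1..} t \<partial>lborel)"
    by (intro nn_integral_mono pointwise)
  then show ?thesis using eq by simp
qed

lemma integral_infinite:
  "(\<integral>\<^sup>+ t\<in>{1..}. ennreal (ln (Phi t) / t\<^sup>2) \<partial>lborel) = \<infinity>"
proof (cases "(\<integral>\<^sup>+ t\<in>{1..}. ennreal (ln (Phi t) / t\<^sup>2) \<partial>lborel)")
  case (real r)
  define n where "n = Suc (nat \<lceil>8 * r\<rceil>)"
  have "ennreal (real n / 8) \<le> ennreal r" using integral_lower[of n] real by simp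
  then have "real n / 8 \<le> r" using real(1) by simp
  moreover have "real n > 8 * r" unfolding n_def by linarith
  ultimately show ?thesis by simp
next
  case top then show ?thesis by simp
qed


lemma Phi_upper: "ln (Phi (sq (Suc k))) \<le> (sq k)\<^sup>2 + 2 * sq k"
proof -
  define T where "T = sq (Suc k)"
  have s2: "sq k \<ge> 2" using sq_ge[of k] by simp
  have T: "T = exp ((sq k)\<^sup>2)" unfolding T_def by simp
  have Tpos: "T > 0" unfolding T by simp
  have "Phi T = PhiN (Suc k) T" unfolding T_def by (rule Phi_eq) simp
  also have "\<dots> \<le> T + (\<Sum>j<Suc k. cc k * T)"
    unfolding PhiN_def
  proof (intro add_left_mono sum_mono mult_mono)
    fix j assume "j \<in> {..<Suc k}"
    then have "sq j \<le> sq k" using sq_le_iff by simp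
    then show "cc j \<le> cc k" unfolding cc_def by simp
    have "sq j \<ge> 0" using sq_ge[of j] by simp
    then show "max 0 (T - sq j) \<le> T" using Tpos by simp
    show "0 \<le> cc k" using cc_pos[of k] by simp
    show "0 \<le> max 0 (T - sq j)" by simp
  qed
  also have "\<dots> = T * (1 + real (Suc k) * cc k)" by (simp add: algebra_simps)
  also have "\<dots> \<le> T * (sq k * cc k)"
  proof (intro mult_left_mono)
    have c1: "cc k \<ge> 1" unfolding cc_def using s2 by simp
    have "1 + real (Suc k) * cc k \<le> cc k + real (Suc k) * cc k" using c1 by simp
    also have "\<dots> = (real k + 2) * cc k" by (simp add: algebra_simps)
    also have "\<dots> \<le> sq k * cc k" using sq_ge[of k] cc_pos[of k] by (intro mult_right_mono) auto
    finally show "1 + real (Suc k) * cc k \<le> sq k * cc k" .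
    show "0 \<le> T" using Tpos by simp
  qed
  finally have P: "Phi T \<le> T * (sq k * cc k)" .
  have Ppos: "Phi T > 0" using Phi_ge[of T] Tpos by simp
  have "ln (Phi T) \<le> ln (T * (sq k * cc k))" using P Ppos by simp
  also have "\<dots> = ln T + ln (sq k) + ln (cc k)" using Tpos s2 cc_pos[of k] by (simp add: ln_mult)
  also have "\<dots> = (sq k)\<^sup>2 + ln (sq k) + sq k" unfolding T cc_def by simp
  also have "\<dots> \<le> (sq k)\<^sup>2 + 2 * sq k" proof -
    have "ln (sq k) < sq k" using s2 by (intro ln_less_self) simp
    then show ?thesis by simp
  qed
  finally show ?thesis unfolding T_def .
qed

lemma ratio_upper: "ln (Phi (sq (Suc k))) / ln (sq (Suc k)) \<le> 1 + 2 / sq k"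
proof -
  have s2: "sq k \<ge> 2" using sq_ge[of k] by simp
  have L: "ln (sq (Suc k)) = (sq k)\<^sup>2" by simp
  have pos: "(sq k)\<^sup>2 > 0" using s2 by simp
  have "ln (Phi (sq (Suc k))) / (sq k)\<^sup>2 \<le> ((sq k)\<^sup>2 + 2 * sq k) / (sq k)\<^sup>2"
    using Phi_upper[of k] pos by (intro divide_right_mono) auto
  also have "\<dots> = 1 + 2 / sq k" using s2 by (simp add: field_simps power2_eq_square)
  finally show ?thesis unfolding L .
qed

lemma Liminf_one: "Liminf at_top (\<lambda>t. ereal (ln (Phi t) / ln t)) = 1"
proof (rule antisym)
  show "1 \<le> Liminf at_top (\<lambda>t. ereal (ln (Phi t) / ln t))"
  proof (rule Liminf_bounded)
    show "eventually (\<lambda>t. 1 \<le> ereal (ln (Phi t) / ln t)) at_top"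
      using eventually_ge_at_top[of "2::real"]
    proof eventually_elim
      case (elim t)
      have "ln t > 0" using elim by simp
      moreover have "ln t \<le> ln (Phi t)" using Phi_ge[of t] elim by simp
      ultimately have "1 \<le> ln (Phi t) / ln t" by simp
      then show ?case by simp
    qed
  qed
next
  show "Liminf at_top (\<lambda>t. ereal (ln (Phi t) / ln t)) \<le> 1"
  proof (rule ccontr)
    assume "\<not> ?thesis"
    then have "1 < Liminf at_top (\<lambda>t. ereal (ln (Phi t) / ln t))" by simp
    from dense[OF this] obtain y where y: "1 < y" "y < Liminf at_top (\<lambda>t. ereal (ln (Phi t) / ln t))"
      by blast
    have all: "\<forall>y'<Liminf at_top (\<lambda>t. ereal (ln (Phi t) / ln t)). eventually (\<lambda>t. y' < ereal (ln (Phi t) / ln t)) at_top"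
      by (rule le_Liminf_iff[THEN iffD1]) (rule order.refl)
    have "eventually (\<lambda>t. y < ereal (ln (Phi t) / ln t)) at_top"
      using all y(2) by blast
    then obtain M where M: "\<And>t. t \<ge> M \<Longrightarrow> y < ereal (ln (Phi t) / ln t)"
      unfolding eventually_at_top_linorder by blast
    have "y \<noteq> \<infinity>" using y(2) by auto
    moreover have "y \<noteq> -\<infinity>" using y(1) by auto
    ultimately obtain r where r: "y = ereal r" by (cases y) auto
    have r1: "r > 1" using y(1) r by simp
    define k where "k = nat \<lceil>max M (2 / (r - 1))\<rceil>"
    have sk: "sq k \<ge> max M (2 / (r - 1)) + 1" using sq_ge[of k] unfolding k_def by linarith
    have "sq (Suc k) \<ge> sq k" using sq_le_iff[of k "Suc k"] by (simp del: sq.simps)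
    then have "sq (Suc k) \<ge> M" using sk by simp
    then have A: "r < ln (Phi (sq (Suc k))) / ln (sq (Suc k))" using M r by force
    have "2 / sq k < r - 1"
    proof -
      have sp: "sq k > 0" using sk sq_ge[of k] by simp
      have "2 / (r - 1) < sq k" using sk by simp
      then have "2 < sq k * (r - 1)" using r1 by (simp add: field_simps)
      then show ?thesis using sp by (simp add: field_simps)
    qed
    then show False using A ratio_upper[of k] by simp
  qed
qed

theorem lemma6p11:
  shows "\<exists>\<Phi> :: real \<Rightarrow> real.
    continuous_on {1..} \<Phi> \<and> strict_mono_on {1..} \<Phi> \<and> convex_on {1..} \<Phi> \<and>
    (\<forall>t\<ge>1. \<Phi> t \<ge> 1) \<and>
    (\<integral>\<^sup>+ t\<in>{1..}. ennreal (ln (\<Phi> t) / t\<^sup>2) \<partial>lborel) = \<infinity> \<and>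
    Liminf at_top (\<lambda>t. ereal (ln (\<Phi> t) / ln t)) = 1 \<and>
    (\<forall>t\<ge>1. \<Phi> t \<ge> t)"
proof (intro exI conjI allI impI)
  show "continuous_on {1..} Phi"
    by (intro continuous_at_imp_continuous_on ballI Phi_isCont)
  show "strict_mono_on {1..} Phi"
    by (auto simp: strict_mono_on_def intro: Phi_strict)
  show "convex_on {1..} Phi" by (rule Phi_convex)
  show "(\<integral>\<^sup>+ t\<in>{1..}. ennreal (ln (Phi t) / t\<^sup>2) \<partial>lborel) = \<infinity>" by (rule integral_infinite)
  show "Liminf at_top (\<lambda>t. ereal (ln (Phi t) / ln t)) = 1" by (rule Liminf_one)
  fix t :: real assume "1 \<le> t"
  then show "1 \<le> Phi t" using Phi_ge[of t] by simp
  show "t \<le> Phi t" by (rule Phi_ge)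
qed

end
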